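(* Let $\nu>0$, $\sigma>0$, $\varepsilon\in(-1,1)$ be fixed (known) and let $\rho(u)=\frac{\nu+1}{2}\log\big(1+\frac{u^2}{\nu(1-\operatorname{sign}(u)\varepsilon)^2}\big)$. For a sample $x_1,\dots,x_n$, let $T_n(x_1,\dots,x_n)$ be any minimizer over $t\in\mathbb{R}$ of $\sum_{i=1}^n\rho\big(\frac{x_i-t}{\sigma}\big)$ (the ML estimator of the location $\theta$ in $ESt(\theta,\sigma,\varepsilon,\nu)$ with $\sigma,\varepsilon,\nu$ known). Then the breakdown point of $T_n$ is $1/2$, in the sense that its finite-sample replacement breakdown point tends to $1/2$ as $n\to\infty$.
   Context: $\operatorname{sign}(t)=1$ for $t\ge0$, $-1$ for $t<0$. $\rho$ equals $-\log f_{ESt}$ up to an additive constant, where $f_{ESt}(x)\propto\big(1+\frac{(x-\theta)^2}{\nu(1-\operatorname{sign}(x-\theta)\varepsilon)^2\sigma^2}\big)^{-(\nu+1)/2}$. The finite-sample replacement breakdown point of $T_n$ at a sample $X$ is $\min\{m/n:\ \sup|T_n(X')|=\infty\}$, the supremum over all samples $X'$ obtained from $X$ by replacing $m$ of the $n$ points by arbitrary values. *)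

theory Defs
  imports Complex_Main
begin

text \<open>Sign convention of the paper: sign t = 1 for t >= 0, -1 for t < 0.\<close>
definition esign :: "real \<Rightarrow> real" where
  "esign t = (if t \<ge> 0 then 1 else -1)"

definition rho_ESt :: "real \<Rightarrow> real \<Rightarrow> real \<Rightarrow> real" where
  "rho_ESt nu eps u = (nu + 1) / 2 * ln (1 + u\<^sup>2 / (nu * (1 - esign u * eps)\<^sup>2))"

definition mle_objective :: "real \<Rightarrow> real \<Rightarrow> real \<Rightarrow> real list \<Rightarrow> real \<Rightarrow> real" where
  "mle_objective nu sigma eps xs t = (\<Sum>x\<leftarrow>xs. rho_ESt nu eps ((x - t) / sigma))"

definition is_mle_location_estimator ::
  "real \<Rightarrow> real \<Rightarrow> real \<Rightarrow> (real list \<Rightarrow> real) \<Rightarrow> bool" where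
  "is_mle_location_estimator nu sigma eps T \<longleftrightarrow>
     (\<forall>xs t. mle_objective nu sigma eps xs (T xs) \<le> mle_objective nu sigma eps xs t)"

definition replacements :: "real list \<Rightarrow> nat \<Rightarrow> real list set" where
  "replacements X m = {X'. length X' = length X \<and>
      card {i. i < length X \<and> X' ! i \<noteq> X ! i} \<le> m}"

definition breakdown_point :: "(real list \<Rightarrow> real) \<Rightarrow> real list \<Rightarrow> real" where
  "breakdown_point T X = Inf {real m / real (length X) | m.
      m \<le> length X \<and> \<not> bdd_above ((\<lambda>X'. \<bar>T X'\<bar>) ` replacements X m)}"

end

theory Submission
  imports Defs
begin

definition amin :: "real \<Rightarrow> real" where "amin eps = min (1-eps) (1+eps)"
definition amax :: "real \<Rightarrow> real" where "amax eps = max (1-eps) (1+eps)"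
definition hK :: "real \<Rightarrow> real \<Rightarrow> real" where "hK nu eps = nu * (amin eps)\<^sup>2"
definition hh :: "real \<Rightarrow> real \<Rightarrow> real \<Rightarrow> real" where
  "hh nu eps u = ln (1 + u\<^sup>2 / hK nu eps)"
definition EE :: "real \<Rightarrow> real" where
  "EE eps = ln ((amax eps)\<^sup>2 / (amin eps)\<^sup>2) + ln 2"

context
  fixes nu eps :: real
  assumes nu: "nu > 0" and e1: "-1 < eps" and e2: "eps < 1"
begin

lemma amin_pos: "amin eps > 0" using e1 e2 by (simp add: amin_def)
lemma hK_pos: "hK nu eps > 0" using nu amin_pos by (simp add: hK_def)

lemma EE_nonneg: "EE eps \<ge> 0"
proof -
  have "amin eps \<le> amax eps" by (simp add: amin_def amax_def)
  hence "(amin eps)\<^sup>2 \<le> (amax eps)\<^sup>2" using amin_pos by (intro power_mono) auto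
  hence "(amax eps)\<^sup>2 / (amin eps)\<^sup>2 \<ge> 1" using amin_pos by simp
  hence "ln ((amax eps)\<^sup>2 / (amin eps)\<^sup>2) \<ge> 0" by simp
  moreover have "ln (2::real) \<ge> 0" by simp
  ultimately show ?thesis by (simp add: EE_def)
qed

lemma hh_nonneg: "hh nu eps u \<ge> 0"
  using hK_pos by (simp add: hh_def)

lemma hh_mono: "\<bar>u\<bar> \<le> \<bar>v\<bar> \<Longrightarrow> hh nu eps u \<le> hh nu eps v"
proof -
  assume "\<bar>u\<bar> \<le> \<bar>v\<bar>"
  hence "u\<^sup>2 \<le> v\<^sup>2" by (metis abs_ge_zero abs_le_square_iff)
  hence "u\<^sup>2 / hK nu eps \<le> v\<^sup>2 / hK nu eps" using hK_pos by (simp add: divide_right_mono)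
  thus ?thesis using hK_pos unfolding hh_def
    by (subst ln_le_cancel_iff) (auto intro: add_pos_nonneg)
qed

lemma hh_sub: "hh nu eps (p + q) \<le> hh nu eps p + hh nu eps q + EE eps"
proof -
  define K where "K = hK nu eps"
  have K: "K > 0" using hK_pos K_def by simp
  have pq0: "0 \<le> (p-q)\<^sup>2" by simp
  have pq: "(p+q)\<^sup>2 \<le> 2*p\<^sup>2 + 2*q\<^sup>2" using pq0 by (simp add: power2_eq_square algebra_simps)
  have "1 + (p+q)\<^sup>2/K \<le> 2 * ((1 + p\<^sup>2/K) * (1 + q\<^sup>2/K))"
  proof -
    have "(p+q)\<^sup>2/K \<le> (2*p\<^sup>2 + 2*q\<^sup>2)/K" using pq K by (simp add: divide_right_mono)
    moreover have "0 \<le> 2 * (p\<^sup>2 * q\<^sup>2) / (K * K)" using K by simp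
    moreover have "2*((1+p\<^sup>2/K)*(1+q\<^sup>2/K)) = 2 + 2*p\<^sup>2/K + 2*q\<^sup>2/K + 2 * (p\<^sup>2 * q\<^sup>2) / (K * K)"
      using K by (simp add: field_simps)
    moreover have "(2*p\<^sup>2 + 2*q\<^sup>2)/K = 2*p\<^sup>2/K + 2*q\<^sup>2/K" by (simp add: add_divide_distrib)
    ultimately show ?thesis by linarith
  qed
  hence "ln (1 + (p+q)\<^sup>2/K) \<le> ln (2 * ((1 + p\<^sup>2/K) * (1 + q\<^sup>2/K)))"
    using K by (subst ln_le_cancel_iff) (auto intro!: mult_pos_pos add_pos_nonneg)
  also have "\<dots> = ln 2 + ln (1 + p\<^sup>2/K) + ln (1 + q\<^sup>2/K)"
  proof -
    have a: "1 + p\<^sup>2/K > 0" "1 + q\<^sup>2/K > 0" using K by (auto intro!: add_pos_nonneg)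
    show ?thesis using a by (simp add: ln_mult)
  qed
  finally have "hh nu eps (p+q) \<le> ln 2 + hh nu eps p + hh nu eps q" by (simp add: hh_def K_def)
  moreover have "ln ((amax eps)\<^sup>2 / (amin eps)\<^sup>2) \<ge> 0"
  proof -
    have "amin eps \<le> amax eps" by (simp add: amin_def amax_def)
    hence "(amin eps)\<^sup>2 \<le> (amax eps)\<^sup>2" using amin_pos by (intro power_mono) auto
    hence "(amax eps)\<^sup>2 / (amin eps)\<^sup>2 \<ge> 1" using amin_pos by simp
    thus ?thesis by simp
  qed
  ultimately show ?thesis by (simp add: EE_def)
qed

lemma a_bounds: "amin eps \<le> 1 - esign u * eps \<and> 1 - esign u * eps \<le> amax eps"
  by (auto simp: esign_def amin_def amax_def)

lemma rho_upper: "rho_ESt nu eps u \<le> (nu+1)/2 * hh nu eps u"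
proof -
  define a where "a = 1 - esign u * eps"
  have a: "amin eps \<le> a" using a_bounds a_def by auto
  have "(amin eps)\<^sup>2 \<le> a\<^sup>2" using a amin_pos by (intro power_mono) auto
  hence "hK nu eps \<le> nu * a\<^sup>2" using nu by (simp add: hK_def)
  hence "u\<^sup>2 / (nu * a\<^sup>2) \<le> u\<^sup>2 / hK nu eps" using hK_pos
    by (intro divide_left_mono) auto
  hence "ln (1 + u\<^sup>2 / (nu * a\<^sup>2)) \<le> hh nu eps u" unfolding hh_def
    using hK_pos nu by (subst ln_le_cancel_iff) (auto intro: add_pos_nonneg)
  thus ?thesis using nu unfolding rho_ESt_def a_def[symmetric]
    by (intro mult_left_mono) auto
qed

lemma rho_lower: "(nu+1)/2 * (hh nu eps u - EE eps) \<le> rho_ESt nu eps u"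
proof -
  define a where "a = 1 - esign u * eps"
  have a: "amin eps \<le> a" "a \<le> amax eps" using a_bounds a_def by auto
  have apos: "a > 0" using a amin_pos by simp
  define D where "D = (amax eps)\<^sup>2 / (amin eps)\<^sup>2"
  have am2: "a\<^sup>2 \<le> (amax eps)\<^sup>2" using a apos by (intro power_mono) auto
  have D1: "D \<ge> 1"
  proof -
    have "(amin eps)\<^sup>2 \<le> (amax eps)\<^sup>2" using a amin_pos by (intro power_mono) auto
    thus ?thesis using amin_pos by (simp add: D_def)
  qed
  have "u\<^sup>2 / hK nu eps \<le> D * (u\<^sup>2 / (nu * a\<^sup>2))"
  proof -
    have "u\<^sup>2 / hK nu eps = u\<^sup>2 * (amax eps)\<^sup>2 / (nu * (amin eps)\<^sup>2 * (amax eps)\<^sup>2)"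
      using amin_pos a by (simp add: hK_def)
    also have "\<dots> \<le> u\<^sup>2 * (amax eps)\<^sup>2 / (nu * (amin eps)\<^sup>2 * a\<^sup>2)"
      using am2 nu amin_pos apos by (intro divide_left_mono mult_left_mono) (auto intro!: mult_pos_pos)
    also have "\<dots> = D * (u\<^sup>2 / (nu * a\<^sup>2))" by (simp add: D_def algebra_simps)
    finally show ?thesis .
  qed
  hence "1 + u\<^sup>2 / hK nu eps \<le> D * (1 + u\<^sup>2 / (nu * a\<^sup>2))" using D1
    by (simp add: algebra_simps)
  hence "hh nu eps u \<le> ln (D * (1 + u\<^sup>2 / (nu * a\<^sup>2)))" unfolding hh_def
    using hK_pos nu D1 by (subst ln_le_cancel_iff) (auto intro!: mult_pos_pos add_pos_nonneg)
  also have "\<dots> = ln D + ln (1 + u\<^sup>2 / (nu * a\<^sup>2))"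
  proof -
    have "1 + u\<^sup>2 / (nu * a\<^sup>2) > 0" using nu by (auto intro!: add_pos_nonneg)
    thus ?thesis using D1 by (simp add: ln_mult)
  qed
  finally have "hh nu eps u \<le> ln D + ln (1 + u\<^sup>2 / (nu * a\<^sup>2))" .
  hence "hh nu eps u - EE eps \<le> ln (1 + u\<^sup>2 / (nu * a\<^sup>2))"
    proof -
    have "ln (2::real) \<ge> 0" by simp
    thus ?thesis using \<open>hh nu eps u \<le> ln D + ln (1 + u\<^sup>2 / (nu * a\<^sup>2))\<close> unfolding EE_def D_def by linarith
  qed
  thus ?thesis using nu unfolding rho_ESt_def a_def[symmetric]
    by (intro mult_left_mono) auto
qed

lemma rho_nonneg: "rho_ESt nu eps u \<ge> 0"
proof -
  have "1 - esign u * eps > 0" using a_bounds[of u] amin_pos by linarith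
  thus ?thesis using nu unfolding rho_ESt_def by (auto intro!: mult_nonneg_nonneg)
qed

lemma hh_big: "\<exists>u\<ge>0. hh nu eps u > K"
proof -
  define u where "u = sqrt (hK nu eps * exp K) + 1"
  have s: "sqrt (hK nu eps * exp K) \<ge> 0" using hK_pos by simp
  have "u\<^sup>2 > hK nu eps * exp K"
  proof -
    have "(sqrt (hK nu eps * exp K))\<^sup>2 = hK nu eps * exp K" using hK_pos by simp
    moreover have "(sqrt (hK nu eps * exp K))\<^sup>2 < u\<^sup>2" unfolding u_def using s
      by (intro power_strict_mono) auto
    ultimately show ?thesis by simp
  qed
  hence "u\<^sup>2 / hK nu eps > exp K" using hK_pos by (simp add: field_simps)
  hence "1 + u\<^sup>2 / hK nu eps > exp K" by simp
  hence "ln (1 + u\<^sup>2 / hK nu eps) > K"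
    by (metis exp_gt_zero ln_exp ln_less_cancel_iff order.strict_trans)
  thus ?thesis using s unfolding hh_def u_def by (intro exI[of _ u]) (auto simp: u_def)
qed

lemma hh_bound: "hh nu eps u \<le> K \<Longrightarrow> \<bar>u\<bar> \<le> sqrt (hK nu eps * exp K)"
proof -
  assume "hh nu eps u \<le> K"
  hence "1 + u\<^sup>2 / hK nu eps \<le> exp K" unfolding hh_def using hK_pos
    by (metis add_pos_nonneg divide_nonneg_pos exp_le_cancel_iff exp_ln zero_le_power2 zero_less_one less_imp_le)
  hence "u\<^sup>2 / hK nu eps \<le> exp K" by simp
  hence "u\<^sup>2 \<le> hK nu eps * exp K" using hK_pos by (simp add: field_simps)
  thus ?thesis by (metis real_sqrt_abs real_sqrt_le_mono)
qed

lemma obj_nth: "mle_objective nu sigma eps xs t = (\<Sum>i<length xs. rho_ESt nu eps ((xs!i - t) / sigma))"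
  unfolding mle_objective_def by (simp add: sum_list_sum_nth atLeast0LessThan)

lemma sum_if_card:
  fixes a b :: real
  assumes "finite A"
  shows "(\<Sum>i\<in>A. if P i then a else b) = real (card (A \<inter> {i. P i})) * a + real (card (A \<inter> - {i. P i})) * b"
  using assms by (simp add: sum.If_cases)

lemma card_split:
  assumes "finite A"
  shows "card (A \<inter> {i. P i}) + card (A \<inter> - {i. P i}) = card A"
proof -
  have "A = (A \<inter> {i. P i}) \<union> (A \<inter> - {i. P i})" by blast
  hence "card A = card ((A \<inter> {i. P i}) \<union> (A \<inter> - {i. P i}))" by simp
  also have "\<dots> = card (A \<inter> {i. P i}) + card (A \<inter> - {i. P i})"
    using assms by (intro card_Un_disjoint) auto
  finally show ?thesis by simp
qed

lemma no_breakdown: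
  fixes sigma :: real and T :: "real list \<Rightarrow> real" and Y :: "real list"
  assumes sig: "sigma > 0" and mle: "is_mle_location_estimator nu sigma eps T"
    and m: "2 * m < length Y"
  shows "bdd_above ((\<lambda>X'. \<bar>T X'\<bar>) ` replacements Y m)"
proof -
  define n where "n = length Y"
  define c where "c = (nu+1)/2"
  have c: "c > 0" using nu by (simp add: c_def)
  define h where "h = hh nu eps"
  define E where "E = EE eps"
  have E: "E \<ge> 0" using EE_nonneg E_def by simp
  have hpos: "\<And>u. h u \<ge> 0" using hh_nonneg h_def by simp
  define R where "R = (\<Sum>i<n. \<bar>Y!i\<bar>)"
  have R: "\<And>i. i < n \<Longrightarrow> \<bar>Y!i\<bar> \<le> R"
    unfolding R_def by (rule member_le_sum) auto
  define r where "r = R / sigma"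
  define K where "K = real n * (2 * h r + 2 * E)"
  have "\<forall>X'\<in>replacements Y m. \<bar>T X'\<bar> \<le> sigma * sqrt (hK nu eps * exp K)"
  proof
    fix X' assume X': "X' \<in> replacements Y m"
    have len: "length X' = n" using X' by (simp add: replacements_def n_def)
    define Bd where "Bd = {i. i < n \<and> X'!i \<noteq> Y!i}"
    have cardB: "card Bd \<le> m" using X' by (simp add: replacements_def Bd_def n_def)
    define t where "t = T X'"
    define s where "s = t / sigma"
    define P where "P = (\<lambda>i. X'!i \<noteq> Y!i)"
    define \<phi> where "\<phi> = (\<lambda>i. if P i then c * (- h s - 2*E) else c * (h s - 2 * h r - 2*E))"
    have per: "\<phi> i \<le> rho_ESt nu eps ((X'!i - t)/sigma) - rho_ESt nu eps ((X'!i - 0)/sigma)"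
      if i: "i < n" for i
    proof -
      define y where "y = X'!i / sigma"
      have eq: "(X'!i - t)/sigma = y - s" unfolding y_def s_def by (simp add: diff_divide_distrib)
      have lo: "c * (h (y - s) - E) \<le> rho_ESt nu eps (y - s)"
        using rho_lower unfolding c_def h_def E_def .
      have up: "rho_ESt nu eps y \<le> c * h y" using rho_upper unfolding c_def h_def .
      show ?thesis
      proof (cases "P i")
        case True
        have "h y \<le> h (y - s) + h s + E" using hh_sub[of "y - s" s] unfolding h_def E_def by simp
        hence "c * h y \<le> c * (h (y - s) + h s + E)" using c by (intro mult_left_mono) auto
        hence "c * (- h s - 2*E) \<le> c * (h (y - s) - E) - c * h y"
          by (simp add: algebra_simps)
        thus ?thesis using True lo up eq unfolding \<phi>_def y_def by simp
      next
        case False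
        hence yY: "X'!i = Y!i" unfolding P_def by simp
        have "\<bar>y\<bar> \<le> r" unfolding y_def r_def yY using R[OF i] sig
          by (simp add: divide_right_mono)
        hence hy: "h y \<le> h r" unfolding h_def by (intro hh_mono) simp
        have "h s \<le> h y + h (s - y) + E" using hh_sub[of y "s - y"] unfolding h_def E_def by simp
        moreover have "h (s - y) = h (y - s)"
          using hh_mono[of "s-y" "y-s"] hh_mono[of "y-s" "s-y"] unfolding h_def by (simp add: abs_minus_commute)
        ultimately have "h s - 2 * h r - 2*E \<le> (h (y - s) - E) - h y" using hy by linarith
        hence "c * (h s - 2 * h r - 2*E) \<le> c * ((h (y - s) - E) - h y)" using c by (intro mult_left_mono) auto
        hence "c * (h s - 2 * h r - 2*E) \<le> c * (h (y - s) - E) - c * h y" by (simp add: algebra_simps)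
        thus ?thesis using False lo up eq unfolding \<phi>_def y_def by simp
      qed
    qed
    have sumphi: "(\<Sum>i<n. \<phi> i) \<le> mle_objective nu sigma eps X' t - mle_objective nu sigma eps X' 0"
      unfolding obj_nth len sum_subtractf[symmetric] using per by (intro sum_mono) auto
    define b where "b = card ({..<n} \<inter> {i. P i})"
    define g where "g = card ({..<n} \<inter> - {i. P i})"
    have bB: "{..<n} \<inter> {i. P i} = Bd" unfolding Bd_def P_def by auto
    have bm: "b \<le> m" using cardB bB b_def by simp
    have gb: "g + b = n" using card_split[of "{..<n}" P] b_def g_def by simp
    have g1: "real g - real b \<ge> 1" using gb bm m n_def by linarith
    have sphi: "(\<Sum>i<n. \<phi> i) = real b * (c * (- h s - 2*E)) + real g * (c * (h s - 2 * h r - 2*E))"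
      unfolding \<phi>_def b_def g_def by (rule sum_if_card) simp
    have "h s \<le> K"
    proof (rule ccontr)
      assume "\<not> h s \<le> K"
      hence hsK: "h s > K" by simp
      have "(\<Sum>i<n. \<phi> i) = c * ((real g - real b) * h s - real g * (2 * h r + 2*E) - real b * (2*E))"
        unfolding sphi by (simp add: algebra_simps)
      moreover have "(real g - real b) * h s \<ge> h s" using g1 hpos[of s]
        by (metis mult_le_cancel_right1 order.strict_iff_not mult.commute)
      moreover have "real g * (2 * h r + 2*E) + real b * (2*E) \<le> K"
      proof -
        have "real b * (2*E) \<le> real b * (2 * h r + 2*E)" using hpos[of r]
          by (intro mult_left_mono) auto
        moreover have "real g * (2 * h r + 2*E) + real b * (2 * h r + 2*E) = K"
          unfolding K_def using gb by (metis of_nat_add distrib_right)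
        ultimately show ?thesis by linarith
      qed
      ultimately have "(\<Sum>i<n. \<phi> i) > 0" using c hsK
        by (smt (verit) mult_pos_pos)
      hence "mle_objective nu sigma eps X' t > mle_objective nu sigma eps X' 0" using sumphi by linarith
      moreover have "mle_objective nu sigma eps X' t \<le> mle_objective nu sigma eps X' 0"
        using mle unfolding is_mle_location_estimator_def t_def by blast
      ultimately show False by linarith
    qed
    hence "\<bar>s\<bar> \<le> sqrt (hK nu eps * exp K)" using hh_bound unfolding h_def by blast
    thus "\<bar>T X'\<bar> \<le> sigma * sqrt (hK nu eps * exp K)" using sig unfolding s_def t_def
      by (simp add: abs_div pos_divide_le_eq mult.commute)
  qed
  thus ?thesis by (intro bdd_aboveI2) blast
qed

lemma breakdown:
  fixes sigma :: real and T :: "real list \<Rightarrow> real" and Y :: "real list"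
  assumes sig: "sigma > 0" and mle: "is_mle_location_estimator nu sigma eps T"
    and m: "length Y < 2 * m" and mn: "m \<le> length Y"
  shows "\<not> bdd_above ((\<lambda>X'. \<bar>T X'\<bar>) ` replacements Y m)"
proof
  assume "bdd_above ((\<lambda>X'. \<bar>T X'\<bar>) ` replacements Y m)"
  then obtain Q0 where Q0: "\<And>X'. X' \<in> replacements Y m \<Longrightarrow> \<bar>T X'\<bar> \<le> Q0"
    by (auto simp: bdd_above_def)
  define Q where "Q = max Q0 0"
  define n where "n = length Y"
  define c where "c = (nu+1)/2"
  have c: "c > 0" using nu by (simp add: c_def)
  define h where "h = hh nu eps"
  define E where "E = EE eps"
  have E: "E \<ge> 0" using EE_nonneg E_def by simp
  have hpos: "\<And>u. h u \<ge> 0" using hh_nonneg h_def by simp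
  define R where "R = (\<Sum>i<n. \<bar>Y!i\<bar>)"
  have R: "\<And>i. i < n \<Longrightarrow> \<bar>Y!i\<bar> \<le> R"
    unfolding R_def by (rule member_le_sum) auto
  have R0: "R \<ge> 0" unfolding R_def by (simp add: sum_nonneg)
  define r where "r = R / sigma"
  have r0: "r \<ge> 0" using R0 sig by (simp add: r_def)
  define q where "q = Q / sigma"
  have q0: "q \<ge> 0" using sig by (simp add: q_def Q_def)
  define K where "K = real n * (h (r + q) + E)"
  obtain u where u0: "u \<ge> 0" and uK: "h u > K" using hh_big[of K] unfolding h_def by blast
  define l where "l = q + u"
  define L where "L = sigma * l"
  define X' where "X' = map (\<lambda>i. if i < m then L else Y!i) [0..<n]"
  have len: "length X' = n" by (simp add: X'_def)
  have nth: "\<And>i. i < n \<Longrightarrow> X'!i = (if i < m then L else Y!i)" by (simp add: X'_def)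
  have X'r: "X' \<in> replacements Y m"
  proof -
    have "{i. i < length Y \<and> X' ! i \<noteq> Y ! i} \<subseteq> {..<m}" using nth n_def by (auto split: if_splits)
    hence "card {i. i < length Y \<and> X' ! i \<noteq> Y ! i} \<le> card {..<m}" by (intro card_mono) auto
    thus ?thesis using len n_def by (simp add: replacements_def)
  qed
  define t where "t = T X'"
  have tQ: "\<bar>t\<bar> \<le> Q" using Q0[OF X'r] unfolding t_def Q_def by simp
  have tq: "\<bar>t / sigma\<bar> \<le> q" using tQ sig unfolding q_def by (simp add: abs_div divide_right_mono)
  have Lsig: "L / sigma = l" using sig by (simp add: L_def)
  have min: "mle_objective nu sigma eps X' t \<le> mle_objective nu sigma eps X' L"
    using mle unfolding is_mle_location_estimator_def t_def by blast
  define A where "A = h (l - q) + h (r + q) + E"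
  have up: "mle_objective nu sigma eps X' L \<le> (\<Sum>i<n. if i < m then 0 else c * A)"
    unfolding obj_nth len
  proof (rule sum_mono)
    fix i assume i: "i \<in> {..<n}"
    show "rho_ESt nu eps ((X'!i - L)/sigma) \<le> (if i < m then 0 else c * A)"
    proof (cases "i < m")
      case True thus ?thesis using nth i by (simp add: rho_ESt_def esign_def)
    next
      case False
      define y where "y = Y!i / sigma"
      have yr: "\<bar>y\<bar> \<le> r" unfolding y_def r_def using R i sig by (simp add: abs_div divide_right_mono)
      have eq: "(X'!i - L)/sigma = y - l" using nth i False Lsig unfolding y_def by (simp add: diff_divide_distrib)
      have "\<bar>y - l\<bar> \<le> \<bar>(l - q) + (r + q)\<bar>" using yr q0 r0 u0 unfolding l_def by linarith
      hence "h (y - l) \<le> h ((l - q) + (r + q))" unfolding h_def by (rule hh_mono)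
      also have "\<dots> \<le> A" unfolding A_def h_def E_def by (rule hh_sub)
      finally have "c * h (y - l) \<le> c * A" using c by (intro mult_left_mono) auto
      moreover have "rho_ESt nu eps (y - l) \<le> c * h (y - l)" using rho_upper unfolding c_def h_def .
      ultimately show ?thesis using False eq by simp
    qed
  qed
  have lo: "(\<Sum>i<n. if i < m then c * (h (l - q) - E) else 0) \<le> mle_objective nu sigma eps X' t"
    unfolding obj_nth len
  proof (rule sum_mono)
    fix i assume i: "i \<in> {..<n}"
    show "(if i < m then c * (h (l - q) - E) else 0) \<le> rho_ESt nu eps ((X'!i - t)/sigma)"
    proof (cases "i < m")
      case False thus ?thesis using rho_nonneg by simp
    next
      case True
      have eq: "(X'!i - t)/sigma = l - t/sigma" using nth i True Lsig by (simp add: diff_divide_distrib)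
      have "\<bar>l - q\<bar> \<le> \<bar>l - t/sigma\<bar>" using tq u0 unfolding l_def by linarith
      hence "h (l - q) \<le> h (l - t/sigma)" unfolding h_def by (rule hh_mono)
      hence "c * (h (l - q) - E) \<le> c * (h (l - t/sigma) - E)" using c by (intro mult_left_mono) auto
      moreover have "c * (h (l - t/sigma) - E) \<le> rho_ESt nu eps (l - t/sigma)"
        using rho_lower unfolding c_def h_def E_def .
      ultimately show ?thesis using True eq by simp
    qed
  qed
  have c1: "{..<n} \<inter> {i. i < m} = {..<m}" using mn n_def by auto
  have c2: "card ({..<n} \<inter> - {i. i < m}) = n - m"
    using card_split[of "{..<n}" "\<lambda>i. i < m"] c1 by simp
  have s1: "(\<Sum>i<n. if i < m then 0 else c * A) = real (n - m) * (c * A)"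
    using sum_if_card[of "{..<n}" "\<lambda>i. i < m" 0 "c * A"] c1 c2 by simp
  have s2: "(\<Sum>i<n. if i < m then c * (h (l - q) - E) else 0) = real m * (c * (h (l - q) - E))"
    using sum_if_card[of "{..<n}" "\<lambda>i. i < m" "c * (h (l - q) - E)" 0] c1 by simp
  have ineq: "real m * (c * (h (l - q) - E)) \<le> real (n - m) * (c * A)"
    using lo up min s1 s2 by linarith
  hence "c * (real m * (h (l - q) - E)) \<le> c * (real (n - m) * A)"
    by (simp add: algebra_simps)
  hence ineq2: "real m * (h (l - q) - E) \<le> real (n - m) * A" using c
    by (simp add: mult_le_cancel_left_pos)
  have nm: "real (n - m) = real n - real m" using mn n_def by simp
  have mk: "real m - real (n - m) \<ge> 1" using m mn n_def nm by linarith
  have "(real m - real (n - m)) * h (l - q) \<le> real (n - m) * h (r + q) + real n * E"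
    using ineq2 unfolding A_def nm by (simp add: algebra_simps)
  moreover have "h (l - q) \<le> (real m - real (n - m)) * h (l - q)" using mk hpos[of "l - q"]
    by (metis mult_le_cancel_right1 order.strict_iff_not mult.commute)
  moreover have "real (n - m) * h (r + q) \<le> real n * h (r + q)" using hpos[of "r+q"] nm
    by (intro mult_right_mono) auto
  ultimately have "h (l - q) \<le> K" unfolding K_def by (simp add: algebra_simps)
  moreover have "l - q = u" by (simp add: l_def)
  ultimately show False using uK by simp
qed

end

theorem corollary3p6:
  fixes nu sigma eps :: real
    and T :: "real list \<Rightarrow> real"
    and X :: "nat \<Rightarrow> real list"
  assumes "nu > 0" and "sigma > 0" and "-1 < eps" and "eps < 1"
    and "is_mle_location_estimator nu sigma eps T"
    and "\<And>n. length (X n) = n"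
  shows "(\<lambda>n. breakdown_point T (X n)) \<longlonglongrightarrow> 1 / 2"
proof -
  have bnd: "1/2 \<le> breakdown_point T (X n) \<and> breakdown_point T (X n) \<le> 1/2 + 1 / real n"
    if n: "n \<ge> 1" for n
  proof -
    define S where "S = {real m / real (length (X n)) | m.
      m \<le> length (X n) \<and> \<not> bdd_above ((\<lambda>X'. \<bar>T X'\<bar>) ` replacements (X n) m)}"
    have bp: "breakdown_point T (X n) = Inf S" unfolding breakdown_point_def S_def ..
    define m0 where "m0 = n div 2 + 1"
    have m0n: "m0 \<le> n" using n unfolding m0_def by presburger
    have m0b: "n < 2 * m0" unfolding m0_def by presburger
    have "\<not> bdd_above ((\<lambda>X'. \<bar>T X'\<bar>) ` replacements (X n) m0)"
      using breakdown[OF assms(1,3,4,2,5)] m0n m0b assms(6)[of n] by simp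
    hence m0S: "real m0 / real n \<in> S" unfolding S_def using m0n assms(6)[of n] by auto
    have low: "\<And>x. x \<in> S \<Longrightarrow> 1/2 \<le> x"
    proof -
      fix x assume "x \<in> S"
      then obtain m where x: "x = real m / real n" and mn: "m \<le> n"
        and nb: "\<not> bdd_above ((\<lambda>X'. \<bar>T X'\<bar>) ` replacements (X n) m)"
        using \<open>x \<in> S\<close> unfolding S_def assms(6)[of n] mem_Collect_eq by (elim exE conjE) (rule that)
      have "\<not> 2 * m < n" using nb no_breakdown[OF assms(1,3,4,2,5)] assms(6)[of n] by metis
      hence "real n \<le> 2 * real m" by linarith
      thus "1/2 \<le> x" unfolding x using n by (simp add: field_simps)
    qed
    have "1/2 \<le> Inf S" using m0S low by (intro cInf_greatest) auto
    moreover have "Inf S \<le> real m0 / real n"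
      using m0S low by (intro cInf_lower bdd_belowI[where m="1/2"]) auto
    moreover have "real m0 / real n \<le> 1/2 + 1 / real n"
    proof -
      have "2 * m0 \<le> n + 2" unfolding m0_def by presburger
      hence "real m0 \<le> real n / 2 + 1" by linarith
      thus ?thesis using n by (simp add: field_simps)
    qed
    ultimately show ?thesis using bp by linarith
  qed
  have lim: "(\<lambda>n. 1/2 + 1 / real n) \<longlonglongrightarrow> 1/2"
    using tendsto_add[OF tendsto_const[of "1/2::real"] lim_inverse_n] by (simp add: inverse_eq_divide)
  show ?thesis
  proof (rule tendsto_sandwich[OF _ _ tendsto_const lim])
    show "\<forall>\<^sub>F n in sequentially. 1/2 \<le> breakdown_point T (X n)"
      using bnd by (intro eventually_sequentiallyI[of 1]) auto
    show "\<forall>\<^sub>F n in sequentially. breakdown_point T (X n) \<le> 1/2 + 1 / real n"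
      using bnd by (intro eventually_sequentiallyI[of 1]) auto
  qed
qed

end
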